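(* Let $M$ and $N$ be finitely generated, semipositive binoids. Then for every $q\in\mathbb N_+$ $$\operatorname{HKF}(M\wedge N,q)=\operatorname{HKF}(M,q)\cdot\operatorname{HKF}(N,q).$$
   Context: A binoid $(N,+,0,\infty)$ is a commutative monoid $(N,+,0)$ with an element $\infty$ satisfying $a+\infty=\infty$ for all $a\in N$. Write $N^\bullet=N\setminus\{\infty\}$, $N^\times$ for the group of units of $N$ and $N_+=N\setminus N^\times$. $N$ is finitely generated if it is finitely generated as a monoid; semipositive if $N\neq\{\infty\}$ and $N^\times$ is finite. The smash product $M\wedge N$ is the binoid $(M^\bullet\times N^\bullet)\cup\{\infty\}$ with $(a,b)+(c,d)=(a+c,b+d)$ if $a+c\neq\infty$ and $b+d\neq\infty$, and $=\infty$ otherwise. An ideal of $N$ is a nonempty subset $I\subseteq N$ with $I+N\subseteq I$. For an ideal $I$ and $q\in\mathbb N_+$, $[q]I$ denotes the ideal generated by $\{qa: a\in I\}$; $N/I=(N\setminus I)\cup\{\infty\}$. $\operatorname{HKF}(N,q)=\#N/[q]N_+$, with $\#S=|S|-1$ for a finite pointed set $S$. *)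

theory Defs
  imports Main
begin

record 'a binoid =
  bcarrier :: "'a set"
  badd :: "'a \<Rightarrow> 'a \<Rightarrow> 'a"
  bzero :: 'a
  binf :: 'a

definition is_binoid :: "'a binoid \<Rightarrow> bool" where
  "is_binoid N \<longleftrightarrow>
     (\<forall>a\<in>bcarrier N. \<forall>b\<in>bcarrier N. badd N a b \<in> bcarrier N) \<and>
     (\<forall>a\<in>bcarrier N. \<forall>b\<in>bcarrier N. \<forall>c\<in>bcarrier N.
        badd N (badd N a b) c = badd N a (badd N b c)) \<and>
     (\<forall>a\<in>bcarrier N. \<forall>b\<in>bcarrier N. badd N a b = badd N b a) \<and>
     bzero N \<in> bcarrier N \<and>
     (\<forall>a\<in>bcarrier N. badd N (bzero N) a = a) \<and>
     binf N \<in> bcarrier N \<and>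
     (\<forall>a\<in>bcarrier N. badd N a (binf N) = binf N)"

definition bdot :: "'a binoid \<Rightarrow> 'a set" where
  "bdot N = bcarrier N - {binf N}"

definition bunits :: "'a binoid \<Rightarrow> 'a set" where
  "bunits N = {a \<in> bcarrier N. \<exists>b\<in>bcarrier N. badd N a b = bzero N}"

definition bplus :: "'a binoid \<Rightarrow> 'a set" where
  "bplus N = bcarrier N - bunits N"

inductive_set bgen :: "'a binoid \<Rightarrow> 'a set \<Rightarrow> 'a set" for N G where
  zero: "bzero N \<in> bgen N G"
| gen: "g \<in> G \<Longrightarrow> g \<in> bgen N G"
| add: "a \<in> bgen N G \<Longrightarrow> b \<in> bgen N G \<Longrightarrow> badd N a b \<in> bgen N G"

definition fin_gen :: "'a binoid \<Rightarrow> bool" where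
  "fin_gen N \<longleftrightarrow> (\<exists>G. finite G \<and> G \<subseteq> bcarrier N \<and> bgen N G = bcarrier N)"

definition semipositive :: "'a binoid \<Rightarrow> bool" where
  "semipositive N \<longleftrightarrow> bcarrier N \<noteq> {binf N} \<and> finite (bunits N)"

primrec bmult :: "'a binoid \<Rightarrow> nat \<Rightarrow> 'a \<Rightarrow> 'a" where
  "bmult N 0 a = bzero N"
| "bmult N (Suc n) a = badd N a (bmult N n a)"

definition bideal_gen :: "'a binoid \<Rightarrow> 'a set \<Rightarrow> 'a set" where
  "bideal_gen N S = {badd N s n | s n. s \<in> S \<and> n \<in> bcarrier N}"

definition bfrob_ideal :: "'a binoid \<Rightarrow> nat \<Rightarrow> 'a set \<Rightarrow> 'a set" where
  "bfrob_ideal N q I = bideal_gen N ((bmult N q) ` I)"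

text \<open>Underlying pointed set of N/I = (N \ I) \<union> {\<infinity>}\<close>
definition bquot_set :: "'a binoid \<Rightarrow> 'a set \<Rightarrow> 'a set" where
  "bquot_set N I = (bcarrier N - I) \<union> {binf N}"

definition pcard :: "'a set \<Rightarrow> nat" where
  "pcard S = card S - 1"

definition HKF :: "'a binoid \<Rightarrow> nat \<Rightarrow> nat" where
  "HKF N q = pcard (bquot_set N (bfrob_ideal N q (bplus N)))"

text \<open>Smash product: carrier (M^\<bullet> \<times> N^\<bullet>) \<union> {\<infinity>}, with \<infinity> represented by None.\<close>
definition smash :: "'a binoid \<Rightarrow> 'b binoid \<Rightarrow> ('a \<times> 'b) option binoid" where
  "smash M N =
     \<lparr> bcarrier = Some ` (bdot M \<times> bdot N) \<union> {None},
       badd = (\<lambda>x y. case (x, y) of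
                 (Some (a, b), Some (c, d)) \<Rightarrow>
                    (if badd M a c \<noteq> binf M \<and> badd N b d \<noteq> binf N
                     then Some (badd M a c, badd N b d) else None)
               | _ \<Rightarrow> None),
       bzero = (if bzero M \<noteq> binf M \<and> bzero N \<noteq> binf N
                then Some (bzero M, bzero N) else None),
       binf = None \<rparr>"

end

theory Submission
  imports Defs
begin

lemma sm_carrier: "bcarrier (smash M N) = Some ` (bdot M \<times> bdot N) \<union> {None}"
  by (simp add: smash_def)
lemma sm_inf: "binf (smash M N) = None"
  by (simp add: smash_def)
lemma sm_zero: "bzero M \<noteq> binf M \<Longrightarrow> bzero N \<noteq> binf N \<Longrightarrow> bzero (smash M N) = Some (bzero M, bzero N)"
  by (simp add: smash_def)
lemma sm_add_None1: "badd (smash M N) None y = None"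
  by (simp add: smash_def)
lemma sm_add_None2: "badd (smash M N) x None = None"
  by (cases x) (auto simp add: smash_def)
lemma sm_add_Some: "badd (smash M N) (Some (a,b)) (Some (c,d)) =
   (if badd M a c \<noteq> binf M \<and> badd N b d \<noteq> binf N then Some (badd M a c, badd N b d) else None)"
  by (simp add: smash_def)

lemma inf_add: "is_binoid M \<Longrightarrow> a \<in> bcarrier M \<Longrightarrow> badd M (binf M) a = binf M"
  unfolding is_binoid_def by metis

lemma zero_ne_inf: "is_binoid M \<Longrightarrow> semipositive M \<Longrightarrow> bzero M \<noteq> binf M"
proof
  assume b: "is_binoid M" and s: "semipositive M" and e: "bzero M = binf M"
  have "\<forall>a\<in>bcarrier M. a = binf M"
  proof
    fix a assume a: "a \<in> bcarrier M"
    have "a = badd M (bzero M) a" using b a unfolding is_binoid_def by metis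
    also have "\<dots> = binf M" using e inf_add[OF b a] by simp
    finally show "a = binf M" .
  qed
  moreover have "binf M \<in> bcarrier M" using b unfolding is_binoid_def by blast
  ultimately show False using s unfolding semipositive_def by blast
qed

lemma bmult_closed: "is_binoid M \<Longrightarrow> a \<in> bcarrier M \<Longrightarrow> bmult M n a \<in> bcarrier M"
  by (induction n) (auto simp: is_binoid_def)

lemma bmult_inf: "is_binoid M \<Longrightarrow> n \<ge> 1 \<Longrightarrow> bmult M n (binf M) = binf M"
proof (induction n)
  case 0 then show ?case by simp
next
  case (Suc n)
  have "bmult M n (binf M) \<in> bcarrier M"
    using bmult_closed[OF Suc.prems(1)] Suc.prems(1) unfolding is_binoid_def by blast
  then show ?case using inf_add[OF Suc.prems(1)] by simp
qed

lemma bmult_sm: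
  assumes bM: "is_binoid M" and bN: "is_binoid N"
    and zM: "bzero M \<noteq> binf M" and zN: "bzero N \<noteq> binf N"
    and a: "a \<in> bcarrier M" and b: "b \<in> bcarrier N"
  shows "bmult (smash M N) n (Some (a,b)) =
    (if bmult M n a \<noteq> binf M \<and> bmult N n b \<noteq> binf N then Some (bmult M n a, bmult N n b) else None)"
proof (induction n)
  case 0 then show ?case using zM zN by (simp add: sm_zero)
next
  case (Suc n)
  show ?case
  proof (cases "bmult M n a \<noteq> binf M \<and> bmult N n b \<noteq> binf N")
    case True then show ?thesis using Suc by (simp add: sm_add_Some)
  next
    case False
    then have "bmult M (Suc n) a = binf M \<or> bmult N (Suc n) b = binf N"
      using bM bN a b unfolding is_binoid_def by auto
    then show ?thesis using Suc False by (simp add: sm_add_None2)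
  qed
qed

lemma bmult_None: "n \<ge> 1 \<Longrightarrow> bmult (smash M N) n None = None"
  by (cases n) (simp_all add: sm_add_None1)

lemma sm_units:
  assumes bM: "is_binoid M" and bN: "is_binoid N"
    and zM: "bzero M \<noteq> binf M" and zN: "bzero N \<noteq> binf N"
  shows "None \<notin> bunits (smash M N)"
    and "a \<in> bdot M \<Longrightarrow> b \<in> bdot N \<Longrightarrow>
        Some (a,b) \<in> bunits (smash M N) \<longleftrightarrow> a \<in> bunits M \<and> b \<in> bunits N"
proof -
  show "None \<notin> bunits (smash M N)"
    using zM zN by (auto simp: bunits_def sm_zero sm_add_None1)
next
  assume a: "a \<in> bdot M" and b: "b \<in> bdot N"
  show "Some (a,b) \<in> bunits (smash M N) \<longleftrightarrow> a \<in> bunits M \<and> b \<in> bunits N"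
  proof
    assume "Some (a,b) \<in> bunits (smash M N)"
    then obtain y where y: "y \<in> bcarrier (smash M N)" "badd (smash M N) (Some (a,b)) y = Some (bzero M, bzero N)"
      using zM zN by (auto simp: bunits_def sm_zero)
    then obtain c d where "y = Some (c,d)" "c \<in> bdot M" "d \<in> bdot N"
      by (auto simp: sm_carrier sm_add_None2)
    then show "a \<in> bunits M \<and> b \<in> bunits N" using y a b
      by (auto simp: bunits_def bdot_def sm_add_Some split: if_splits)
  next
    assume "a \<in> bunits M \<and> b \<in> bunits N"
    then obtain c d where c: "c \<in> bcarrier M" "badd M a c = bzero M"
      and d: "d \<in> bcarrier N" "badd N b d = bzero N" by (auto simp: bunits_def)
    have "c \<noteq> binf M" using c bM a zM unfolding bdot_def is_binoid_def by auto
    moreover have "d \<noteq> binf N" using d bN b zN unfolding bdot_def is_binoid_def by auto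
    ultimately show "Some (a,b) \<in> bunits (smash M N)"
      using a b c d zM zN unfolding bunits_def
      by (intro CollectI conjI bexI[of _ "Some (c,d)"]) (auto simp: sm_zero sm_carrier bdot_def sm_add_Some)
  qed
qed



lemma bmult_zero: "is_binoid M \<Longrightarrow> bmult M n (bzero M) = bzero M"
  by (induction n) (auto simp: is_binoid_def)

lemma idealI: "a \<in> S \<Longrightarrow> n \<in> bcarrier M \<Longrightarrow> x = badd M (bmult M q a) n \<Longrightarrow> x \<in> bfrob_ideal M q S"
  unfolding bfrob_ideal_def bideal_gen_def by blast

lemma idealE: "x \<in> bfrob_ideal M q S \<Longrightarrow> (\<And>a n. a \<in> S \<Longrightarrow> n \<in> bcarrier M \<Longrightarrow> x = badd M (bmult M q a) n \<Longrightarrow> P) \<Longrightarrow> P"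
  unfolding bfrob_ideal_def bideal_gen_def by blast

lemma inf_in_ideal:
  assumes bM: "is_binoid M" and zM: "bzero M \<noteq> binf M" and q: "q \<ge> 1"
  shows "binf M \<in> bfrob_ideal M q (bplus M)"
proof -
  have ic: "binf M \<in> bcarrier M" "bzero M \<in> bcarrier M" using bM unfolding is_binoid_def by auto
  have "binf M \<in> bplus M" using ic zM inf_add[OF bM] by (auto simp: bplus_def bunits_def)
  moreover have "badd M (bmult M q (binf M)) (bzero M) = binf M"
    using bmult_inf[OF bM q] inf_add[OF bM] ic by simp
  ultimately show ?thesis using ic by (metis idealI)
qed

lemma ideal_sub:
  assumes bM: "is_binoid M"
  shows "bfrob_ideal M q (bplus M) \<subseteq> bcarrier M"
  using bmult_closed[OF bM] bM unfolding bfrob_ideal_def bideal_gen_def bplus_def is_binoid_def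
  by blast

lemma None_in_ideal:
  assumes bM: "is_binoid M" and bN: "is_binoid N"
    and zM: "bzero M \<noteq> binf M" and zN: "bzero N \<noteq> binf N" and q: "q \<ge> 1"
  shows "None \<in> bfrob_ideal (smash M N) q (bplus (smash M N))"
proof -
  have "None \<in> bplus (smash M N)" using sm_units(1)[OF bM bN zM zN]
    by (simp add: bplus_def sm_carrier)
  moreover have "None \<in> bcarrier (smash M N)" by (simp add: sm_carrier)
  moreover have "badd (smash M N) (bmult (smash M N) q None) None = None"
    by (simp add: sm_add_None1 bmult_None[OF q])
  ultimately show ?thesis by (metis idealI)
qed

lemma Some_in_ideal:
  assumes bM: "is_binoid M" and bN: "is_binoid N"
    and zM: "bzero M \<noteq> binf M" and zN: "bzero N \<noteq> binf N" and q: "q \<ge> 1"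
    and x: "x \<in> bdot M" and y: "y \<in> bdot N"
  shows "Some (x,y) \<in> bfrob_ideal (smash M N) q (bplus (smash M N)) \<longleftrightarrow>
     x \<in> bfrob_ideal M q (bplus M) \<or> y \<in> bfrob_ideal N q (bplus N)"
proof
  assume "Some (x,y) \<in> bfrob_ideal (smash M N) q (bplus (smash M N))"
  then obtain s n where s: "s \<in> bplus (smash M N)" and n: "n \<in> bcarrier (smash M N)"
    and e: "Some (x,y) = badd (smash M N) (bmult (smash M N) q s) n"
    by (metis idealE)
  have "s \<noteq> None"
  proof
    assume "s = None"
    then show False using e bmult_None[OF q, of M N] by (simp add: sm_add_None1)
  qed
  then obtain a b where sab: "s = Some (a,b)" and a: "a \<in> bdot M" and b: "b \<in> bdot N"
    using s by (auto simp: bplus_def sm_carrier)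
  have "n \<noteq> None"
  proof
    assume "n = None"
    then show False using e by (simp add: sm_add_None2)
  qed
  then obtain c d where ncd: "n = Some (c,d)" and c: "c \<in> bdot M" and d: "d \<in> bdot N"
    using n by (auto simp: sm_carrier)
  have ac: "a \<in> bcarrier M" "b \<in> bcarrier N" using a b by (auto simp: bdot_def)
  have e2: "x = badd M (bmult M q a) c \<and> y = badd N (bmult N q b) d"
    using e unfolding sab ncd bmult_sm[OF bM bN zM zN ac]
    by (auto simp: sm_add_None1 sm_add_Some split: if_splits)
  have "a \<notin> bunits M \<or> b \<notin> bunits N"
    using s sm_units(2)[OF bM bN zM zN a b] unfolding sab bplus_def by auto
  then show "x \<in> bfrob_ideal M q (bplus M) \<or> y \<in> bfrob_ideal N q (bplus N)"
    using e2 ac c d unfolding bplus_def bdot_def by (metis Diff_iff idealI)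
next
  have cM: "bzero M \<in> bcarrier M" "binf M \<in> bcarrier M" using bM unfolding is_binoid_def by auto
  have cN: "bzero N \<in> bcarrier N" "binf N \<in> bcarrier N" using bN unfolding is_binoid_def by auto
  have addinfM: "\<And>u. u \<in> bcarrier M \<Longrightarrow> badd M u (binf M) = binf M" using bM unfolding is_binoid_def by blast
  have addinfN: "\<And>u. u \<in> bcarrier N \<Longrightarrow> badd N u (binf N) = binf N" using bN unfolding is_binoid_def by blast
  have z0M: "\<And>u. u \<in> bcarrier M \<Longrightarrow> badd M (bzero M) u = u" using bM unfolding is_binoid_def by blast
  have z0N: "\<And>u. u \<in> bcarrier N \<Longrightarrow> badd N (bzero N) u = u" using bN unfolding is_binoid_def by blast
  have zdM: "bzero M \<in> bdot M" using cM zM by (simp add: bdot_def)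
  have zdN: "bzero N \<in> bdot N" using cN zN by (simp add: bdot_def)
  assume "x \<in> bfrob_ideal M q (bplus M) \<or> y \<in> bfrob_ideal N q (bplus N)"
  then show "Some (x,y) \<in> bfrob_ideal (smash M N) q (bplus (smash M N))"
  proof
    assume "x \<in> bfrob_ideal M q (bplus M)"
    then obtain a c where a: "a \<in> bplus M" and c: "c \<in> bcarrier M"
      and xe: "x = badd M (bmult M q a) c"
      by (metis idealE)
    have ac: "a \<in> bcarrier M" using a by (simp add: bplus_def)
    have qac: "bmult M q a \<in> bcarrier M" using bmult_closed[OF bM ac] .
    have xi: "x \<noteq> binf M" using x by (simp add: bdot_def)
    have ai: "a \<noteq> binf M" using xe xi bmult_inf[OF bM q] inf_add[OF bM c] by auto
    have ci: "c \<noteq> binf M" using xe xi addinfM[OF qac] by auto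
    have qai: "bmult M q a \<noteq> binf M" using xe xi inf_add[OF bM c] by auto
    have ad: "a \<in> bdot M" using ac ai by (simp add: bdot_def)
    have sp: "Some (a, bzero N) \<in> bplus (smash M N)"
      using a sm_units(2)[OF bM bN zM zN ad zdN] ad zdN
      by (auto simp: bplus_def sm_carrier)
    have nc: "Some (c, y) \<in> bcarrier (smash M N)" using c ci y by (auto simp: sm_carrier bdot_def)
    have "badd (smash M N) (bmult (smash M N) q (Some (a, bzero N))) (Some (c,y)) = Some (x,y)"
      using bmult_sm[OF bM bN zM zN ac cN(1), of q] bmult_zero[OF bN] qai zN xe xi y z0N
      by (auto simp: sm_add_Some bdot_def)
    then show ?thesis using sp nc by (metis idealI)
  next
    assume "y \<in> bfrob_ideal N q (bplus N)"
    then obtain b d where b: "b \<in> bplus N" and d: "d \<in> bcarrier N"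
      and ye: "y = badd N (bmult N q b) d"
      by (metis idealE)
    have bc: "b \<in> bcarrier N" using b by (simp add: bplus_def)
    have qbc: "bmult N q b \<in> bcarrier N" using bmult_closed[OF bN bc] .
    have yi: "y \<noteq> binf N" using y by (simp add: bdot_def)
    have bi: "b \<noteq> binf N" using ye yi bmult_inf[OF bN q] inf_add[OF bN d] by auto
    have di: "d \<noteq> binf N" using ye yi addinfN[OF qbc] by auto
    have qbi: "bmult N q b \<noteq> binf N" using ye yi inf_add[OF bN d] by auto
    have bd: "b \<in> bdot N" using bc bi by (simp add: bdot_def)
    have sp: "Some (bzero M, b) \<in> bplus (smash M N)"
      using b sm_units(2)[OF bM bN zM zN zdM bd] bd zdM
      by (auto simp: bplus_def sm_carrier)
    have nc: "Some (x, d) \<in> bcarrier (smash M N)" using d di x by (auto simp: sm_carrier bdot_def)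
    have "badd (smash M N) (bmult (smash M N) q (Some (bzero M, b))) (Some (x,d)) = Some (x,y)"
      using bmult_sm[OF bM bN zM zN cM(1) bc, of q] bmult_zero[OF bM] qbi zM ye yi x z0M
      by (auto simp: sm_add_Some bdot_def)
    then show ?thesis using sp nc by (metis idealI)
  qed
qed


lemma pcard_ins: "x \<notin> A \<Longrightarrow> pcard (insert x A) = card A"
  by (cases "finite A") (simp_all add: pcard_def)

theorem mainTheorem11:
  fixes M :: "'a binoid" and N :: "'b binoid" and q :: nat
  assumes "is_binoid M" "is_binoid N"
    and "fin_gen M" "fin_gen N"
    and "semipositive M" "semipositive N"
    and "q \<ge> 1"
  shows "HKF (smash M N) q = HKF M q * HKF N q"
proof -
  note bM = assms(1) and bN = assms(2) and q = assms(7)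
  have zM: "bzero M \<noteq> binf M" using zero_ne_inf assms by blast
  have zN: "bzero N \<noteq> binf N" using zero_ne_inf assms by blast
  define A where "A = bcarrier M - bfrob_ideal M q (bplus M)"
  define B where "B = bcarrier N - bfrob_ideal N q (bplus N)"
  have iM: "binf M \<in> bfrob_ideal M q (bplus M)" using inf_in_ideal[OF bM zM q] .
  have iN: "binf N \<in> bfrob_ideal N q (bplus N)" using inf_in_ideal[OF bN zN q] .
  have qM: "bquot_set M (bfrob_ideal M q (bplus M)) = insert (binf M) A"
    unfolding bquot_set_def A_def by auto
  have qN: "bquot_set N (bfrob_ideal N q (bplus N)) = insert (binf N) B"
    unfolding bquot_set_def B_def by auto
  have nM: "binf M \<notin> A" using iM A_def by auto
  have nN: "binf N \<notin> B" using iN B_def by auto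
  have qS: "bquot_set (smash M N) (bfrob_ideal (smash M N) q (bplus (smash M N)))
        = insert None (Some ` (A \<times> B))"
  proof -
    have "bcarrier (smash M N) - bfrob_ideal (smash M N) q (bplus (smash M N)) = Some ` (A \<times> B)"
    proof (rule set_eqI)
      fix z
      show "z \<in> bcarrier (smash M N) - bfrob_ideal (smash M N) q (bplus (smash M N)) \<longleftrightarrow> z \<in> Some ` (A \<times> B)"
      proof (cases z)
        case None then show ?thesis using None_in_ideal[OF bM bN zM zN q] by auto
      next
        case (Some p)
        then obtain x y where z: "z = Some (x,y)" by (cases p) auto
        show ?thesis
        proof (cases "x \<in> bdot M \<and> y \<in> bdot N")
          case True
          then show ?thesis using Some_in_ideal[OF bM bN zM zN q, of x y] z
            by (auto simp: sm_carrier A_def B_def bdot_def)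
        next
          case False
          then show ?thesis using z iM iN by (auto simp: sm_carrier A_def B_def bdot_def)
        qed
      qed
    qed
    then show ?thesis unfolding bquot_set_def sm_inf by auto
  qed
  have "HKF (smash M N) q = card (Some ` (A \<times> B))"
    unfolding HKF_def qS by (rule pcard_ins) auto
  also have "\<dots> = card (A \<times> B)" by (rule card_image) simp
  also have "\<dots> = card A * card B" by (rule card_cartesian_product)
  also have "\<dots> = HKF M q * HKF N q"
    unfolding HKF_def qM qN pcard_ins[OF nM] pcard_ins[OF nN] ..
  finally show ?thesis .
qed

end
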